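(* If a Banach space $Y$ contains a strictly convex $2$-dimensional subspace, then there exists a uniformly convex Banach space $X$ such that the pair $(X,Y)$ fails the uniform sBPBp.
   Context: Scalars $\mathbb{K}=\mathbb{R}$ or $\mathbb{C}$; $S_X$ is the unit sphere of $X$, $\mathcal{L}(X,Y)$ the bounded linear operators. A pair of Banach spaces $(X,Y)$ has the uniform strong Bishop–Phelps–Bollobás property (uniform sBPBp) if for every $\varepsilon>0$ there exists $\eta(\varepsilon)>0$ such that whenever $T\in\mathcal{L}(X,Y)$ with $\|T\|=1$ and $x_0\in S_X$ satisfy $\|T(x_0)\|>1-\eta(\varepsilon)$, there exists $x_1\in S_X$ with $\|T(x_1)\|=1$ and $\|x_1-x_0\|<\varepsilon$. *)

theory Defs
  imports "HOL-Analysis.Analysis" "HOL-Library.Function_Algebras"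
begin

text \<open>Scalars: a type 'k of class real_normed_field (by Mazur's theorem exactly
  the real or the complex numbers, up to isomorphism).\<close>

definition K_normed_space ::
  "'x::ab_group_add set \<Rightarrow> ('k::real_normed_field \<Rightarrow> 'x \<Rightarrow> 'x) \<Rightarrow> ('x \<Rightarrow> real) \<Rightarrow> bool" where
  "K_normed_space V sc N \<longleftrightarrow>
     0 \<in> V \<and> (\<forall>x\<in>V. \<forall>y\<in>V. x + y \<in> V) \<and> (\<forall>c. \<forall>x\<in>V. sc c x \<in> V) \<and>
     (\<forall>a b. \<forall>x\<in>V. sc (a + b) x = sc a x + sc b x) \<and>
     (\<forall>a. \<forall>x\<in>V. \<forall>y\<in>V. sc a (x + y) = sc a x + sc a y) \<and>
     (\<forall>a b. \<forall>x\<in>V. sc (a * b) x = sc a (sc b x)) \<and>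
     (\<forall>x\<in>V. sc 1 x = x) \<and>
     (\<forall>x\<in>V. N x = 0 \<longleftrightarrow> x = 0) \<and>
     (\<forall>c. \<forall>x\<in>V. N (sc c x) = norm c * N x) \<and>
     (\<forall>x\<in>V. \<forall>y\<in>V. N (x + y) \<le> N x + N y)"

definition K_banach_space ::
  "'x::ab_group_add set \<Rightarrow> ('k::real_normed_field \<Rightarrow> 'x \<Rightarrow> 'x) \<Rightarrow> ('x \<Rightarrow> real) \<Rightarrow> bool" where
  "K_banach_space V sc N \<longleftrightarrow> K_normed_space V sc N \<and>
     (\<forall>f :: nat \<Rightarrow> 'x. (\<forall>n. f n \<in> V) \<and>
        (\<forall>e>0. \<exists>M. \<forall>m\<ge>M. \<forall>n\<ge>M. N (f m - f n) < e) \<longrightarrow>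
        (\<exists>x\<in>V. \<forall>e>0. \<exists>M. \<forall>n\<ge>M. N (f n - x) < e))"

text \<open>A K-vector space structure on a real Banach space type, compatible with
  the real scalar multiplication and the norm (e.g. a complex Banach space).\<close>

definition K_scalar_action :: "('k::real_normed_field \<Rightarrow> 'b::real_normed_vector \<Rightarrow> 'b) \<Rightarrow> bool" where
  "K_scalar_action sc \<longleftrightarrow>
     (\<forall>r y. sc (of_real r) y = r *\<^sub>R y) \<and>
     (\<forall>a b y. sc (a + b) y = sc a y + sc b y) \<and>
     (\<forall>a y z. sc a (y + z) = sc a y + sc a z) \<and>
     (\<forall>a b y. sc (a * b) y = sc a (sc b y)) \<and>
     (\<forall>a y. norm (sc a y) = norm a * norm y)"

definition uniformly_convex :: "'x::ab_group_add set \<Rightarrow> ('x \<Rightarrow> real) \<Rightarrow> bool" where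
  "uniformly_convex V N \<longleftrightarrow>
     (\<forall>\<epsilon>>0. \<exists>\<delta>>0. \<forall>x\<in>V. \<forall>y\<in>V. N x = 1 \<and> N y = 1 \<and> N (x - y) \<ge> \<epsilon> \<longrightarrow>
        N (x + y) / 2 \<le> 1 - \<delta>)"

definition strictly_convex_set :: "'b::real_normed_vector set \<Rightarrow> bool" where
  "strictly_convex_set W \<longleftrightarrow>
     (\<forall>x\<in>W. \<forall>y\<in>W. norm x = 1 \<and> norm y = 1 \<and> x \<noteq> y \<longrightarrow> norm (x + y) / 2 < 1)"

definition K_span2 :: "('k::real_normed_field \<Rightarrow> 'b \<Rightarrow> 'b) \<Rightarrow> 'b::ab_group_add \<Rightarrow> 'b \<Rightarrow> 'b set" where
  "K_span2 sc u v = {sc a u + sc b v | a b. True}"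

definition K_indep2 :: "('k::real_normed_field \<Rightarrow> 'b \<Rightarrow> 'b) \<Rightarrow> 'b::ab_group_add \<Rightarrow> 'b \<Rightarrow> bool" where
  "K_indep2 sc u v \<longleftrightarrow> (\<forall>a b. sc a u + sc b v = 0 \<longrightarrow> a = 0 \<and> b = 0)"

definition K_linear_on ::
  "'x::ab_group_add set \<Rightarrow> ('k::real_normed_field \<Rightarrow> 'x \<Rightarrow> 'x) \<Rightarrow> ('k \<Rightarrow> 'b \<Rightarrow> 'b)
     \<Rightarrow> ('x \<Rightarrow> 'b::ab_group_add) \<Rightarrow> bool" where
  "K_linear_on V scX scY T \<longleftrightarrow>
     (\<forall>x\<in>V. \<forall>y\<in>V. T (x + y) = T x + T y) \<and> (\<forall>c. \<forall>x\<in>V. T (scX c x) = scY c (T x))"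

definition bounded_on :: "'x set \<Rightarrow> ('x \<Rightarrow> real) \<Rightarrow> ('x \<Rightarrow> 'b::real_normed_vector) \<Rightarrow> bool" where
  "bounded_on V N T \<longleftrightarrow> (\<exists>C. \<forall>x\<in>V. norm (T x) \<le> C * N x)"

definition op_norm_on :: "'x set \<Rightarrow> ('x \<Rightarrow> real) \<Rightarrow> ('x \<Rightarrow> 'b::real_normed_vector) \<Rightarrow> real" where
  "op_norm_on V N T = Sup ((\<lambda>x. norm (T x)) ` {x \<in> V. N x \<le> 1})"

definition uniform_sBPBp ::
  "'x::ab_group_add set \<Rightarrow> ('k::real_normed_field \<Rightarrow> 'x \<Rightarrow> 'x) \<Rightarrow> ('x \<Rightarrow> real)
     \<Rightarrow> ('k \<Rightarrow> 'b::real_normed_vector \<Rightarrow> 'b) \<Rightarrow> bool" where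
  "uniform_sBPBp V scX N scY \<longleftrightarrow>
     (\<forall>\<epsilon>>0. \<exists>\<eta>>0. \<forall>T :: 'x \<Rightarrow> 'b.
        K_linear_on V scX scY T \<and> bounded_on V N T \<and> op_norm_on V N T = 1 \<longrightarrow>
        (\<forall>x0\<in>V. N x0 = 1 \<and> norm (T x0) > 1 - \<eta> \<longrightarrow>
           (\<exists>x1\<in>V. N x1 = 1 \<and> norm (T x1) = 1 \<and> N (x1 - x0) < \<epsilon>)))"

end

theory Submission
  imports Defs
begin


lemma quad_id:
  fixes y P Q :: "'a::comm_ring_1"
  shows "(y^2 - (P^2 - Q^2))^2 + (2*P*Q)^2 = ((y-P)^2+Q^2)*((y+P)^2+Q^2)"
  by (simp add: power2_eq_square algebra_simps)

definition Bc :: "'k::real_normed_field \<Rightarrow> complex \<Rightarrow> 'k" where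
  "Bc Y c = (Y - of_real (Re c))^2 + of_real ((Im c)^2)"

lemma Bc_split:
  fixes Y :: "'k::real_normed_field"
  assumes "w^2 = c"
  shows "Bc (Y^2) c = Bc Y w * Bc Y (-w)"
proof -
  have "Re c = (Re w)^2 - (Im w)^2" "Im c = 2 * Re w * Im w"
    using assms by (auto simp: Re_power2 Im_power2)
  then have "Bc (Y^2) c = (Y^2 - ((of_real (Re w))^2 - (of_real (Im w))^2))^2
       + (2 * of_real (Re w) * of_real (Im w))^2"
    unfolding Bc_def by (simp add: of_real_diff of_real_mult power_mult_distrib)
  also have "\<dots> = ((Y - of_real (Re w))^2 + (of_real (Im w))^2) *
                   ((Y + of_real (Re w))^2 + (of_real (Im w))^2)"
    by (rule quad_id)
  also have "\<dots> = Bc Y w * Bc Y (-w)"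
    unfolding Bc_def by simp
  finally show ?thesis .
qed

lemma Bc_shift:
  fixes Y :: "'k::real_normed_field"
  shows "Bc (Y - of_real r) w = Bc Y (of_real r + w)"
  unfolding Bc_def by (simp add: algebra_simps)

lemma Bc_add:
  fixes Y :: "'k::real_normed_field"
  shows "Bc (Y + of_real s) c = Bc Y (c - of_real s)"
  unfolding Bc_def by (simp add: algebra_simps)

lemma L_base:
  fixes xi :: "'k::real_normed_field"
  assumes min: "\<And>z. norm (Bc xi z) \<ge> m" and m0: "m \<ge> 0"
  shows "norm (Bc (Bc xi z0) c) \<ge> m^2"
proof -
  define r where "r = Re z0"
  define s2 where "s2 = (Im z0)^2"
  define w where "w = csqrt (c - of_real s2)"
  have g: "Bc xi z0 = (xi - of_real r)^2 + of_real s2"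
    unfolding Bc_def r_def s2_def by simp
  have "Bc (Bc xi z0) c = Bc ((xi - of_real r)^2) (c - of_real s2)"
    unfolding g Bc_add ..
  also have "\<dots> = Bc (xi - of_real r) w * Bc (xi - of_real r) (-w)"
    by (rule Bc_split) (simp add: w_def)
  also have "\<dots> = Bc xi (of_real r + w) * Bc xi (of_real r + -w)"
    by (simp only: Bc_shift)
  finally have e: "Bc (Bc xi z0) c = Bc xi (of_real r + w) * Bc xi (of_real r + -w)" .
  have "m * m \<le> norm (Bc xi (of_real r + w)) * norm (Bc xi (of_real r + -w))"
    using min m0 by (intro mult_mono) auto
  then show ?thesis unfolding e norm_mult by (simp add: power2_eq_square)
qed

lemma L_pow:
  fixes xi :: "'k::real_normed_field"
  assumes min: "\<And>z. norm (Bc xi z) \<ge> m" and m0: "m \<ge> 0"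
  shows "norm (Bc ((Bc xi z0)^(2^l)) c) \<ge> m^(2*2^l)"
proof (induction l arbitrary: c)
  case 0
  then show ?case using L_base[OF min m0] by simp
next
  case (Suc l)
  define w where "w = csqrt c"
  have "(Bc xi z0)^(2^Suc l) = ((Bc xi z0)^(2^l))^2"
  proof -
    have "(2::nat)^Suc l = 2^l * 2" by simp
    then show ?thesis by (simp only: power_mult)
  qed
  moreover have "w^2 = c" by (simp add: w_def)
  ultimately have "Bc ((Bc xi z0)^(2^Suc l)) c = Bc ((Bc xi z0)^(2^l)) w * Bc ((Bc xi z0)^(2^l)) (-w)"
    using Bc_split[of w c "(Bc xi z0)^(2^l)"] by (simp only:)
  moreover have "m^(2*2^l) * m^(2*2^l) \<le> norm (Bc ((Bc xi z0)^(2^l)) w) * norm (Bc ((Bc xi z0)^(2^l)) (-w))"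
    using Suc.IH m0 by (intro mult_mono) auto
  moreover have "m^(2*2^l) * m^(2*2^l) = m^(2*2^Suc l)"
  proof -
    have "(2::nat)*2^Suc l = 2*2^l + 2*2^l" by simp
    then show ?thesis by (simp only: power_add)
  qed
  ultimately show ?case by (simp only: norm_mult)
qed

lemma L_main:
  fixes xi :: "'k::real_normed_field"
  assumes min: "\<And>z. norm (Bc xi z) \<ge> m" and m0: "m \<ge> 0"
  shows "w0^(2^l) = c \<Longrightarrow> norm (Bc ((Bc xi z0)^(2^l)) c) \<ge> norm (Bc (Bc xi z0) w0) * m^(2*2^l - 2)"
proof (induction l arbitrary: c)
  case 0
  then have "w0 = c" by (simp only: power_0 power_one_right)
  moreover have "(2::nat)*2^0 - 2 = 0" by simp
  ultimately show ?case by (simp only: power_0 power_one_right mult_1_right order_refl)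
next
  case (Suc l)
  define w where "w = w0^(2^l)"
  have wc: "w^2 = c"
  proof -
    have "(2::nat)^Suc l = 2^l * 2" by simp
    then show ?thesis using Suc.prems by (simp only: w_def power_mult)
  qed
  have "(Bc xi z0)^(2^Suc l) = ((Bc xi z0)^(2^l))^2"
  proof -
    have "(2::nat)^Suc l = 2^l * 2" by simp
    then show ?thesis by (simp only: power_mult)
  qed
  then have e: "Bc ((Bc xi z0)^(2^Suc l)) c = Bc ((Bc xi z0)^(2^l)) w * Bc ((Bc xi z0)^(2^l)) (-w)"
    using Bc_split[OF wc] by (simp only:)
  have "(norm (Bc (Bc xi z0) w0) * m^(2*2^l - 2)) * m^(2*2^l) \<le> norm (Bc ((Bc xi z0)^(2^l)) w) * norm (Bc ((Bc xi z0)^(2^l)) (-w))"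
  proof (rule mult_mono)
    show "norm (Bc (Bc xi z0) w0) * m^(2*2^l - 2) \<le> norm (Bc ((Bc xi z0)^(2^l)) w)"
      using Suc.IH[of w] w_def by blast
    show "m^(2*2^l) \<le> norm (Bc ((Bc xi z0)^(2^l)) (-w))"
      by (rule L_pow[OF min m0])
    show "0 \<le> norm (Bc ((Bc xi z0)^(2^l)) w)" by simp
    show "0 \<le> m ^ (2 * 2 ^ l)" using m0 by simp
  qed
  moreover have "m^(2*2^l - 2) * m^(2*2^l) = m^(2*2^Suc l - 2)"
  proof -
    have "(2::nat)*2^Suc l - 2 = (2*2^l - 2) + 2*2^l" by simp
    then show ?thesis by (simp only: power_add)
  qed
  ultimately show ?case unfolding e norm_mult by (simp add: mult.assoc)
qed

lemma L_step:
  fixes xi :: "'k::real_normed_field"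
  assumes min: "\<And>z. norm (Bc xi z) \<ge> m" and m0: "m > 0"
    and z0: "norm (Bc xi z0) = m" and e0: "0 < e" and em: "e < m"
  shows "norm (Bc xi (Complex (Re z0) (sqrt ((Im z0)^2 + e)))) = m"
proof -
  define g where "g = Bc xi z0"
  have gz1: "Bc xi (Complex (Re z0) (sqrt ((Im z0)^2 + e))) = g + of_real e"
    unfolding g_def Bc_def using e0 by (simp add: algebra_simps)
  define A where "A = norm (g + of_real e)"
  have key: "A \<le> m + m * (e/m)^(2^Suc k)" for k
  proof -
    define N :: nat where "N = 2^Suc k"
    have N1: "N \<ge> 1" unfolding N_def by simp
    have Nev: "N = 2 * 2^k" unfolding N_def by simp
    have w0c: "(complex_of_real (-e))^N = complex_of_real (e^N)"
    proof -
      have "(-e)^N = ((-e)^2)^(2^k)" unfolding Nev by (simp only: power_mult)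
      also have "\<dots> = (e^2)^(2^k)" by simp
      also have "\<dots> = e^N" unfolding Nev by (simp only: power_mult)
      finally show ?thesis by (metis of_real_power)
    qed
    have "norm (Bc (g^N) (complex_of_real (e^N))) \<ge> norm (Bc g (complex_of_real (-e))) * m^(2*N - 2)"
      unfolding g_def N_def by (rule L_main[OF min less_imp_le[OF m0]]) (use w0c N_def in simp)
    moreover have "Bc (g^N) (complex_of_real (e^N)) = (g^N - of_real (e^N))^2"
      unfolding Bc_def by simp
    moreover have "Bc g (complex_of_real (-e)) = (g + of_real e)^2"
      unfolding Bc_def by simp
    ultimately have "A^2 * m^(2*N-2) \<le> norm (g^N - of_real (e^N))^2"
      unfolding A_def by (simp add: norm_power)
    moreover have "norm (g^N - of_real (e^N)) \<le> m^N + e^N"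
    proof -
      have "norm (g^N - of_real (e^N)) \<le> norm (g^N) + norm (of_real (e^N) :: 'k)"
        by (rule norm_triangle_ineq4)
      also have "\<dots> = m^N + e^N" using e0 unfolding g_def z0 by (simp add: norm_power z0)
      finally show ?thesis .
    qed
    ultimately have "A^2 * m^(2*N-2) \<le> (m^N + e^N)^2"
      by (smt (verit) norm_ge_zero power_mono)
    moreover have "A^2 * m^(2*N-2) = (A * m^(N-1))^2"
    proof -
      have "2*N - 2 = (N-1)*2" using N1 by simp
      then show ?thesis by (simp only: power_mult_distrib power_mult)
    qed
    ultimately have "(A * m^(N-1))^2 \<le> (m^N + e^N)^2" by simp
    then have "A * m^(N-1) \<le> m^N + e^N"
      by (rule power2_le_imp_le) (use m0 e0 in simp)
    moreover have "m^N = m * m^(N-1)" and "e^N = m * m^(N-1) * (e/m)^N"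
      using N1 m0 by (simp_all add: power_eq_if[of m N] power_divide field_simps)
    ultimately have "A * m^(N-1) \<le> (m + m * (e/m)^N) * m^(N-1)"
      by (simp add: algebra_simps)
    then show ?thesis unfolding N_def using m0 by simp
  qed
  have "A \<le> m"
  proof (rule ccontr)
    assume "\<not> A \<le> m"
    then have d: "(A - m)/m > 0" using m0 by simp
    have q1: "e/m < 1" "0 \<le> e/m" using e0 em m0 by auto
    obtain n where n: "(e/m)^n < (A - m)/m" using real_arch_pow_inv[OF d q1(1)] by blast
    have "n \<le> 2^Suc n" using less_exp[of n] by (simp only: power_Suc)
    then have "(e/m)^(2^Suc n) \<le> (e/m)^n" using q1 by (intro power_decreasing) auto
    then have "(e/m)^(2^Suc n) < (A - m)/m" using n by linarith
    then have "m * (e/m)^(2^Suc n) < m * ((A - m)/m)" using m0 by (rule mult_strict_left_mono)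
    then have "m * (e/m)^(2^Suc n) < A - m" using m0 by simp
    with key[of n] show False by simp
  qed
  moreover have "A \<ge> m" using min[of "Complex (Re z0) (sqrt ((Im z0)^2 + e))"] unfolding gz1 A_def .
  ultimately show ?thesis unfolding gz1 A_def by simp
qed

lemma Bc_lower:
  fixes xi :: "'k::real_normed_field"
  shows "norm (Bc xi z) \<ge> (cmod z)^2 - 2 * cmod z * norm xi - (norm xi)^2"
proof -
  have e: "Bc xi z = of_real ((Re z)^2 + (Im z)^2) - (2 * of_real (Re z) * xi - xi^2)"
    unfolding Bc_def by (simp add: algebra_simps power2_eq_square)
  have "norm (2 * of_real (Re z) * xi - xi^2) \<le> 2 * \<bar>Re z\<bar> * norm xi + (norm xi)^2"
    by (rule order_trans[OF norm_triangle_ineq4]) (simp add: norm_mult norm_power)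
  also have "\<dots> \<le> 2 * cmod z * norm xi + (norm xi)^2"
    by (simp add: abs_Re_le_cmod mult_right_mono)
  finally have h: "norm (2 * of_real (Re z) * xi - xi^2) \<le> 2 * cmod z * norm xi + (norm xi)^2" .
  have "norm (Bc xi z) \<ge> norm (of_real ((Re z)^2 + (Im z)^2) :: 'k) - norm (2 * of_real (Re z) * xi - xi^2)"
    unfolding e by (rule norm_triangle_ineq2)
  moreover have "norm (of_real ((Re z)^2 + (Im z)^2) :: 'k) = \<bar>(Re z)^2 + (Im z)^2\<bar>"
    by (rule norm_of_real)
  moreover have "\<bar>(Re z)^2 + (Im z)^2\<bar> = (cmod z)^2"
    by (simp add: cmod_power2)
  ultimately show ?thesis using h by linarith
qed

lemma root_exists:
  fixes xi :: "'k::real_normed_field"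
  shows "\<exists>z. Bc xi z = 0"
proof -
  define F where "F = (\<lambda>z. norm (Bc xi z))"
  define R where "R = 3 * norm xi + 1"
  have cont: "continuous_on (cball 0 R) F"
    unfolding F_def Bc_def by (intro continuous_intros)
  have "R \<ge> 0" unfolding R_def by simp
  then have ne: "cball (0::complex) R \<noteq> {}" by simp
  obtain z0 where z0: "z0 \<in> cball 0 R" "\<And>y. y \<in> cball 0 R \<Longrightarrow> F z0 \<le> F y"
    using continuous_attains_inf[OF compact_cball ne cont] by blast
  have glob: "F z0 \<le> F z" for z
  proof (cases "z \<in> cball 0 R")
    case True then show ?thesis using z0 by blast
  next
    case False
    then have t: "cmod z > R" by simp
    have "F z \<ge> (cmod z)^2 - 2 * cmod z * norm xi - (norm xi)^2"
      unfolding F_def by (rule Bc_lower)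
    moreover have "(cmod z)^2 - 2 * cmod z * norm xi - (norm xi)^2 \<ge> (norm xi)^2"
    proof -
      have a: "norm xi \<ge> 0" by simp
      have "cmod z - 2 * norm xi \<ge> norm xi" using t R_def by simp
      then have "cmod z * (cmod z - 2 * norm xi) \<ge> cmod z * norm xi"
        using t R_def a by (intro mult_left_mono) auto
      moreover have "cmod z * norm xi \<ge> 2 * (norm xi)^2"
      proof -
        have "2 * norm xi \<le> cmod z" using t R_def a by linarith
        then have "(2 * norm xi) * norm xi \<le> cmod z * norm xi" using a by (rule mult_right_mono)
        then show ?thesis by (simp add: power2_eq_square)
      qed
      ultimately show ?thesis by (simp add: algebra_simps power2_eq_square)
    qed
    moreover have "F 0 = (norm xi)^2" unfolding F_def Bc_def by (simp add: norm_power)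
    moreover have "F z0 \<le> F 0" using z0 R_def by simp
    ultimately show ?thesis by linarith
  qed
  define m where "m = F z0"
  show ?thesis
  proof (cases "m = 0")
    case True then show ?thesis unfolding m_def F_def by auto
  next
    case False
    then have m0: "m > 0" unfolding m_def F_def by simp
    define e where "e = m / 2"
    have e0: "0 < e" "e < m" using m0 unfolding e_def by auto
    have min: "\<And>z. norm (Bc xi z) \<ge> m" using glob unfolding m_def F_def by blast
    define zk where "zk = (\<lambda>k::nat. Complex (Re z0) (sqrt ((Im z0)^2 + real k * e)))"
    have zk: "norm (Bc xi (zk k)) = m" for k
    proof (induction k)
      case 0
      have "Bc xi (zk 0) = Bc xi z0" unfolding zk_def Bc_def by simp
      then show ?case unfolding m_def F_def by simp
    next
      case (Suc k)
      have nn: "0 \<le> (Im z0)^2 + real k * e" using e0 by simp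
      have "norm (Bc xi (Complex (Re (zk k)) (sqrt ((Im (zk k))^2 + e)))) = m"
        by (rule L_step[OF min m0 Suc.IH e0])
      moreover have "Complex (Re (zk k)) (sqrt ((Im (zk k))^2 + e)) = zk (Suc k)"
        unfolding zk_def using nn by (simp add: algebra_simps)
      ultimately show ?case by simp
    qed
    define c where "c = norm ((xi - of_real (Re z0))^2)"
    obtain k :: nat where k: "real k > (m + c) / e" using reals_Archimedean2 by blast
    have "Bc xi (zk k) = (xi - of_real (Re z0))^2 + of_real ((Im z0)^2 + real k * e)"
      unfolding zk_def Bc_def using e0 by simp
    then have "norm (Bc xi (zk k)) \<ge> norm (of_real ((Im z0)^2 + real k * e) :: 'k) - c"
      unfolding c_def by (metis add.commute norm_diff_ineq)
    moreover have "norm (of_real ((Im z0)^2 + real k * e) :: 'k) \<ge> real k * e"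
    proof -
      have "norm (of_real ((Im z0)^2 + real k * e) :: 'k) = \<bar>(Im z0)^2 + real k * e\<bar>"
        by (rule norm_of_real)
      then show ?thesis using e0 by simp
    qed
    moreover have "real k * e > m + c" using k e0 by (simp add: field_simps)
    ultimately have "norm (Bc xi (zk k)) > m" by linarith
    with zk[of k] show ?thesis by simp
  qed
qed

lemma coord_bound:
  fixes i :: "'k::real_normed_field"
  assumes i2: "i^2 = -1"
  shows "\<bar>a\<bar> \<le> 2 * norm (of_real a + of_real b * i) \<and> \<bar>b\<bar> \<le> 2 * norm (of_real a + of_real b * i)"
proof -
  define x where "x = (of_real a + of_real b * i :: 'k)"
  have ni: "norm i = 1"
  proof -
    have "norm (i^2) = 1" using i2 by simp
    then have "norm i ^ 2 = 1" by (simp only: norm_power)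
    then have "norm i = 1 \<or> norm i = - 1" by (simp add: power2_eq_1_iff)
    then show ?thesis using norm_ge_zero[of i] by linarith
  qed
  have "x * (of_real a - of_real b * i) = (of_real a)^2 - (of_real b)^2 * i^2"
    unfolding x_def by (simp add: algebra_simps power2_eq_square)
  then have prod: "x * (of_real a - of_real b * i) = of_real (a^2 + b^2)"
    using i2 by simp
  have "norm x * norm (of_real a - of_real b * i :: 'k) = norm (of_real (a^2 + b^2) :: 'k)"
    using prod by (simp only: norm_mult[symmetric])
  also have "\<dots> = a^2 + b^2" by (simp only: norm_of_real) simp
  finally have p: "norm x * norm (of_real a - of_real b * i :: 'k) = a^2 + b^2" .
  have q: "norm (of_real a - of_real b * i :: 'k) \<le> \<bar>a\<bar> + \<bar>b\<bar>"
    by (rule order_trans[OF norm_triangle_ineq4]) (simp add: norm_mult ni)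
  define M where "M = max \<bar>a\<bar> \<bar>b\<bar>"
  have M0: "M \<ge> 0" unfolding M_def by simp
  have "M^2 \<le> a^2 + b^2"
  proof (cases "\<bar>a\<bar> \<le> \<bar>b\<bar>")
    case True then have "M = \<bar>b\<bar>" unfolding M_def by simp
    then show ?thesis by simp
  next
    case False then have "M = \<bar>a\<bar>" unfolding M_def by simp
    then show ?thesis by simp
  qed
  also have "\<dots> \<le> norm x * (\<bar>a\<bar> + \<bar>b\<bar>)" unfolding p[symmetric]
    by (rule mult_left_mono[OF q norm_ge_zero])
  also have "\<dots> \<le> norm x * (2 * M)" unfolding M_def
    by (rule mult_left_mono) auto
  finally have h: "M * M \<le> (2 * norm x) * M" by (simp add: power2_eq_square algebra_simps)
  have "M \<le> 2 * norm x"
  proof (cases "M = 0")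
    case False
    with M0 have "M > 0" by simp
    then show ?thesis using h by simp
  qed simp
  then show ?thesis unfolding x_def M_def by auto
qed

lemma k_struct:
  "\<exists>i::'k::real_normed_field. \<forall>xi. \<exists>a b::real. xi = of_real a + of_real b * i
        \<and> \<bar>a\<bar> \<le> 2 * norm xi \<and> \<bar>b\<bar> \<le> 2 * norm xi"
proof -
  define i :: 'k where "i = (if (\<exists>j::'k. j^2 = -1) then (SOME j. j^2 = -1) else 0)"
  have "\<exists>a b::real. xi = of_real a + of_real b * i \<and> \<bar>a\<bar> \<le> 2 * norm xi \<and> \<bar>b\<bar> \<le> 2 * norm xi" for xi :: 'k
  proof -
    obtain z where z: "Bc xi z = 0" using root_exists by blast
    define r where "r = Re z"
    define s where "s = Im z"
    have e: "(xi - of_real r)^2 = - of_real (s^2)"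
      using z unfolding Bc_def r_def s_def by (simp add: eq_neg_iff_add_eq_0)
    show ?thesis
    proof (cases "s = 0")
      case True
      then have "xi = of_real r" using e by simp
      then show ?thesis by (intro exI[of _ r] exI[of _ 0]) simp
    next
      case False
      define j where "j = (xi - of_real r) / of_real s"
      have j2: "j^2 = -1" unfolding j_def using e False by (simp add: power_divide)
      then have ex: "\<exists>j::'k. j^2 = -1" by blast
      then have i2: "i^2 = -1" unfolding i_def using someI_ex[OF ex] by simp
      then have "j^2 = i^2" using j2 by simp
      then have "j = i \<or> j = -i" using power2_eq_iff[of j i] by simp
      moreover have xj: "xi = of_real r + of_real s * j" unfolding j_def using False by simp
      ultimately obtain b where b: "xi = of_real r + of_real b * i"
      proof (elim disjE)
        assume "j = i" "xi = of_real r + of_real s * j"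
        then show ?thesis using that[of s] by simp
      next
        assume "j = -i" "xi = of_real r + of_real s * j"
        then have "xi = of_real r + of_real (-s) * i" by simp
        then show ?thesis using that[of "-s"] by blast
      qed
      show ?thesis using coord_bound[OF i2, of r b] b by blast
    qed
  qed
  then show ?thesis by blast
qed

lemma BW_k:
  fixes f :: "nat \<Rightarrow> 'k::real_normed_field"
  assumes "\<And>n. norm (f n) \<le> B"
  shows "\<exists>l r. strict_mono r \<and> ((f \<circ> r) \<longlonglongrightarrow> l)"
proof -
  obtain i :: 'k where i: "\<And>xi. \<exists>a b::real. xi = of_real a + of_real b * i
        \<and> \<bar>a\<bar> \<le> 2 * norm xi \<and> \<bar>b\<bar> \<le> 2 * norm xi" using k_struct by blast
  have "\<forall>n. \<exists>p::real\<times>real. f n = of_real (fst p) + of_real (snd p) * i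
        \<and> \<bar>fst p\<bar> \<le> 2 * norm (f n) \<and> \<bar>snd p\<bar> \<le> 2 * norm (f n)"
  proof
    fix n
    obtain a b where ab: "f n = of_real a + of_real b * i"
        "\<bar>a\<bar> \<le> 2 * norm (f n)" "\<bar>b\<bar> \<le> 2 * norm (f n)" using i[of "f n"] by blast
    show "\<exists>p::real\<times>real. f n = of_real (fst p) + of_real (snd p) * i
        \<and> \<bar>fst p\<bar> \<le> 2 * norm (f n) \<and> \<bar>snd p\<bar> \<le> 2 * norm (f n)"
      by (rule exI[of _ "(a,b)"]) (use ab in simp)
  qed
  then have "\<exists>g. \<forall>n. f n = of_real (fst (g n)) + of_real (snd (g n)) * i
        \<and> \<bar>fst (g n)\<bar> \<le> 2 * norm (f n) \<and> \<bar>snd (g n)\<bar> \<le> 2 * norm (f n)"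
    by (rule choice)
  then obtain g where g: "\<And>n. f n = of_real (fst (g n)) + of_real (snd (g n)) * i
        \<and> \<bar>fst (g n)\<bar> \<le> 2 * norm (f n) \<and> \<bar>snd (g n)\<bar> \<le> 2 * norm (f n)"
    by blast
  have "norm (g n) \<le> 4 * B" for n
  proof -
    have "norm (g n) \<le> norm (fst (g n)) + norm (snd (g n))"
      by (metis norm_Pair_le prod.collapse)
    moreover have "norm (f n) \<le> B" by (rule assms)
    moreover have "\<bar>fst (g n)\<bar> \<le> 2 * norm (f n)" "\<bar>snd (g n)\<bar> \<le> 2 * norm (f n)"
      using g[of n] by blast+
    ultimately show ?thesis unfolding real_norm_def by linarith
  qed
  then have "bounded (range g)" unfolding bounded_iff by blast
  then obtain l r where r: "strict_mono r" "(g \<circ> r) \<longlonglongrightarrow> l"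
    using bounded_imp_convergent_subsequence by blast
  have "(\<lambda>n. of_real (fst ((g \<circ> r) n)) + of_real (snd ((g \<circ> r) n)) * i)
      \<longlonglongrightarrow> of_real (fst l) + of_real (snd l) * i"
    by (intro tendsto_intros r(2))
  moreover have "(\<lambda>n. of_real (fst ((g \<circ> r) n)) + of_real (snd ((g \<circ> r) n)) * i) = f \<circ> r"
  proof
    fix n show "of_real (fst ((g \<circ> r) n)) + of_real (snd ((g \<circ> r) n)) * i = (f \<circ> r) n"
      using g[of "r n"] by simp
  qed
  ultimately show ?thesis using r(1) by auto
qed



locale msetup =
  fixes scY :: "'k::{real_normed_field,banach} \<Rightarrow> 'b::banach \<Rightarrow> 'b"
    and u v :: 'b
  assumes sa: "K_scalar_action scY"
    and ind: "K_indep2 scY u v"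
    and sconv: "strictly_convex_set (K_span2 scY u v)"
begin

lemma sc_real: "scY (of_real r) y = r *\<^sub>R y" using sa unfolding K_scalar_action_def by blast
lemma sc_add1: "scY (a + b) y = scY a y + scY b y" using sa unfolding K_scalar_action_def by blast
lemma sc_add2: "scY a (y + z) = scY a y + scY a z" using sa unfolding K_scalar_action_def by blast
lemma sc_mult: "scY (a * b) y = scY a (scY b y)" using sa unfolding K_scalar_action_def by blast
lemma sc_norm: "norm (scY a y) = norm a * norm y" using sa unfolding K_scalar_action_def by blast

lemma sc_zero1[simp]: "scY 0 y = 0" using sc_real[of 0 y] by simp
lemma sc_one[simp]: "scY 1 y = y" using sc_real[of 1 y] by simp
lemma sc_zero2[simp]: "scY a 0 = 0" using sc_norm[of a 0] by simp
lemma sc_minus1: "scY (- a) y = - scY a y"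
  using sc_add1[of a "-a" y] by (simp add: eq_neg_iff_add_eq_0 add.commute)
lemma sc_minus2: "scY a (- y) = - scY a y"
  using sc_add2[of a y "-y"] by (simp add: eq_neg_iff_add_eq_0 add.commute)
lemma sc_diff1: "scY (a - b) y = scY a y - scY b y"
  using sc_add1[of a "-b" y] sc_minus1 by simp
lemma sc_diff2: "scY a (y - z) = scY a y - scY a z"
  using sc_add2[of a y "-z"] sc_minus2 by simp
lemma sc_scaleR: "scY a (r *\<^sub>R y) = r *\<^sub>R scY a y"
proof -
  have "scY a (r *\<^sub>R y) = scY a (scY (of_real r) y)" by (simp add: sc_real)
  also have "\<dots> = scY (of_real r * a) y" by (simp add: sc_mult mult.commute)
  also have "\<dots> = r *\<^sub>R scY a y" by (simp add: sc_mult sc_real)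
  finally show ?thesis .
qed

definition A :: "'k \<Rightarrow> 'k \<Rightarrow> 'b" where "A a b = scY a u + scY b v"
definition phi :: "'k \<Rightarrow> 'k \<Rightarrow> real" where "phi a b = norm (A a b)"

lemma A_add: "A (a + a') (b + b') = A a b + A a' b'"
  unfolding A_def by (simp add: sc_add1 algebra_simps)
lemma A_diff: "A (a - a') (b - b') = A a b - A a' b'"
  unfolding A_def by (simp add: sc_diff1 algebra_simps)
lemma A_scale: "A (c * a) (c * b) = scY c (A a b)"
  unfolding A_def by (simp add: sc_mult sc_add2)
lemma A_scaleR: "A (of_real r * a) (of_real r * b) = r *\<^sub>R A a b"
  unfolding A_scale sc_real ..
lemma A_zero[simp]: "A 0 0 = 0" unfolding A_def by simp
lemma A_inj: "A a b = 0 \<Longrightarrow> a = 0 \<and> b = 0"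
  using ind unfolding K_indep2_def A_def by blast
lemma A_span: "A a b \<in> K_span2 scY u v"
  unfolding K_span2_def A_def by blast

lemma phi_scale: "phi (c * a) (c * b) = norm c * phi a b"
  unfolding phi_def A_scale sc_norm ..
lemma phi_add: "phi (a + a') (b + b') \<le> phi a b + phi a' b'"
  unfolding phi_def A_add by (rule norm_triangle_ineq)
lemma phi_upper: "phi a b \<le> norm a * norm u + norm b * norm v"
  unfolding phi_def A_def using norm_triangle_ineq[of "scY a u" "scY b v"] by (simp add: sc_norm)
lemma phi_zero_iff: "phi a b = 0 \<longleftrightarrow> a = 0 \<and> b = 0"
  unfolding phi_def using A_inj by auto
lemma phi_nonneg: "phi a b \<ge> 0" unfolding phi_def by simp
lemma phi_lip: "\<bar>phi a b - phi a' b'\<bar> \<le> norm (a - a') * norm u + norm (b - b') * norm v"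
proof -
  have "\<bar>phi a b - phi a' b'\<bar> \<le> norm (A a b - A a' b')"
    unfolding phi_def by (rule norm_triangle_ineq3)
  also have "\<dots> = phi (a - a') (b - b')" unfolding phi_def A_diff ..
  finally show ?thesis using phi_upper[of "a - a'" "b - b'"] by linarith
qed

lemma sc_tendsto:
  assumes "f \<longlonglongrightarrow> a"
  shows "(\<lambda>n. scY (f n) y) \<longlonglongrightarrow> scY a y"
proof -
  have "(\<lambda>n. f n - a) \<longlonglongrightarrow> 0" using assms by (rule LIM_zero)
  then have "(\<lambda>n. norm (f n - a)) \<longlonglongrightarrow> 0" by (rule tendsto_norm_zero)
  then have "(\<lambda>n. norm (f n - a) * norm y) \<longlonglongrightarrow> 0 * norm y" by (rule tendsto_mult_right)
  then have t: "(\<lambda>n. norm (f n - a) * norm y) \<longlonglongrightarrow> 0" by simp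
  have "\<forall>n. norm (scY (f n) y - scY a y) \<le> norm (f n - a) * norm y"
    by (simp add: sc_diff1[symmetric] sc_norm)
  then have "(\<lambda>n. scY (f n) y - scY a y) \<longlonglongrightarrow> 0"
    by (intro Lim_null_comparison[OF _ t]) simp
  then show ?thesis by (rule LIM_zero_cancel)
qed

lemma A_tendsto:
  assumes "f \<longlonglongrightarrow> a" "g \<longlonglongrightarrow> b"
  shows "(\<lambda>n. A (f n) (g n)) \<longlonglongrightarrow> A a b"
  unfolding A_def by (intro tendsto_add sc_tendsto assms)

lemma phi_tendsto:
  assumes "f \<longlonglongrightarrow> a" "g \<longlonglongrightarrow> b"
  shows "(\<lambda>n. phi (f n) (g n)) \<longlonglongrightarrow> phi a b"
  unfolding phi_def by (intro tendsto_norm A_tendsto assms)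

end



lemma BW_k2:
  fixes f g :: "nat \<Rightarrow> 'k::real_normed_field"
  assumes "\<And>n. norm (f n) \<le> B" "\<And>n. norm (g n) \<le> B"
  shows "\<exists>r l1 l2. strict_mono r \<and> (f \<circ> r) \<longlonglongrightarrow> l1 \<and> (g \<circ> r) \<longlonglongrightarrow> l2"
proof -
  obtain l1 r1 where r1: "strict_mono r1" "(f \<circ> r1) \<longlonglongrightarrow> l1" using BW_k[of f B] assms(1) by blast
  obtain l2 r2 where r2: "strict_mono r2" "((g \<circ> r1) \<circ> r2) \<longlonglongrightarrow> l2"
    using BW_k[of "g \<circ> r1" B] assms(2) by auto
  have "(f \<circ> (r1 \<circ> r2)) \<longlonglongrightarrow> l1"
    using LIMSEQ_subseq_LIMSEQ[OF r1(2) r2(1)] by (simp add: o_assoc)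
  moreover have "(g \<circ> (r1 \<circ> r2)) \<longlonglongrightarrow> l2" using r2(2) by (simp add: o_assoc)
  moreover have "strict_mono (r1 \<circ> r2)" using r1(1) r2(1) by (rule strict_mono_o)
  ultimately show ?thesis by blast
qed

lemma BW_k4:
  fixes f g h k :: "nat \<Rightarrow> 'k::real_normed_field"
  assumes "\<And>n. norm (f n) \<le> B" "\<And>n. norm (g n) \<le> B" "\<And>n. norm (h n) \<le> B" "\<And>n. norm (k n) \<le> B"
  shows "\<exists>r l1 l2 l3 l4. strict_mono r \<and> (f \<circ> r) \<longlonglongrightarrow> l1 \<and> (g \<circ> r) \<longlonglongrightarrow> l2
     \<and> (h \<circ> r) \<longlonglongrightarrow> l3 \<and> (k \<circ> r) \<longlonglongrightarrow> l4"
proof -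
  obtain r1 l1 l2 where r1: "strict_mono r1" "(f \<circ> r1) \<longlonglongrightarrow> l1" "(g \<circ> r1) \<longlonglongrightarrow> l2"
    using BW_k2[of f B g] assms(1,2) by blast
  obtain r2 l3 l4 where r2: "strict_mono r2" "((h \<circ> r1) \<circ> r2) \<longlonglongrightarrow> l3" "((k \<circ> r1) \<circ> r2) \<longlonglongrightarrow> l4"
    using BW_k2[of "h \<circ> r1" B "k \<circ> r1"] assms(3,4) by auto
  have "(f \<circ> (r1 \<circ> r2)) \<longlonglongrightarrow> l1"
    using LIMSEQ_subseq_LIMSEQ[OF r1(2) r2(1)] by (simp add: o_assoc)
  moreover have "(g \<circ> (r1 \<circ> r2)) \<longlonglongrightarrow> l2"
    using LIMSEQ_subseq_LIMSEQ[OF r1(3) r2(1)] by (simp add: o_assoc)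
  moreover have "(h \<circ> (r1 \<circ> r2)) \<longlonglongrightarrow> l3" using r2(2) by (simp add: o_assoc)
  moreover have "(k \<circ> (r1 \<circ> r2)) \<longlonglongrightarrow> l4" using r2(3) by (simp add: o_assoc)
  moreover have "strict_mono (r1 \<circ> r2)" using r1(1) r2(1) by (rule strict_mono_o)
  ultimately show ?thesis by blast
qed

lemma inv_Suc_tendsto: "(\<lambda>n. inverse (real (Suc n))) \<longlonglongrightarrow> 0"
  by (rule LIMSEQ_inverse_real_of_nat)

lemma inv_Suc_mono:
  assumes "strict_mono r"
  shows "inverse (real (Suc (r n))) \<le> inverse (real (Suc n))"
proof -
  have "n \<le> r n" using seq_suble[OF assms] by simp
  then show ?thesis by (simp add: field_simps)
qed

context msetup
begin

lemma phi_lower: "\<exists>\<kappa>>0. \<forall>a b. \<kappa> * (norm a + norm b) \<le> phi a b"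
proof (rule ccontr)
  assume H: "\<not> ?thesis"
  have "\<forall>n. \<exists>p::'k\<times>'k. norm (fst p) + norm (snd p) = 1 \<and> phi (fst p) (snd p) < inverse (real (Suc n))"
  proof
    fix n
    have "inverse (real (Suc n)) > 0" by simp
    then obtain a b where ab: "\<not> inverse (real (Suc n)) * (norm a + norm b) \<le> phi a b"
      using H by blast
    define s where "s = norm a + norm b"
    have s0: "s > 0"
    proof (rule ccontr)
      assume "\<not> s > 0"
      then have "s = 0" unfolding s_def by (smt (verit) norm_ge_zero)
      then show False using ab phi_nonneg[of a b] unfolding s_def by simp
    qed
    define a' where "a' = of_real (inverse s) * a"
    define b' where "b' = of_real (inverse s) * b"
    have na: "norm (of_real c * x) = \<bar>c\<bar> * norm x" for c and x :: 'k
      by (simp only: norm_mult norm_of_real)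
    have "norm a' + norm b' = inverse s * s"
      unfolding a'_def b'_def na using s0 by (simp add: algebra_simps s_def)
    then have n1: "norm a' + norm b' = 1" using s0 by simp
    have "phi a' b' = inverse s * phi a b"
      unfolding a'_def b'_def phi_scale norm_of_real using s0 by simp
    also have "\<dots> < inverse s * (inverse (real (Suc n)) * s)"
      using ab s0 unfolding s_def by (intro mult_strict_left_mono) auto
    also have "\<dots> = inverse (real (Suc n))" using s0 by simp
    finally show "\<exists>p::'k\<times>'k. norm (fst p) + norm (snd p) = 1 \<and> phi (fst p) (snd p) < inverse (real (Suc n))"
      using n1 by (intro exI[of _ "(a',b')"]) simp
  qed
  then obtain P where P: "\<And>n. norm (fst (P n)) + norm (snd (P n)) = 1 \<and> phi (fst (P n)) (snd (P n)) < inverse (real (Suc n))"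
    by metis
  define f where "f = (\<lambda>n. fst (P n))"
  define g where "g = (\<lambda>n. snd (P n))"
  have fb: "norm (f n) \<le> 1" and gb: "norm (g n) \<le> 1" for n
    using P[of n] unfolding f_def g_def by (smt (verit) norm_ge_zero)+
  obtain r a b where r: "strict_mono r" "(f \<circ> r) \<longlonglongrightarrow> a" "(g \<circ> r) \<longlonglongrightarrow> b"
    using BW_k2[of f 1 g] fb gb by blast
  have "(\<lambda>n. norm ((f \<circ> r) n) + norm ((g \<circ> r) n)) \<longlonglongrightarrow> norm a + norm b"
    by (intro tendsto_intros r)
  moreover have "(\<lambda>n. norm ((f \<circ> r) n) + norm ((g \<circ> r) n)) = (\<lambda>n. 1)"
    using P unfolding f_def g_def by auto
  ultimately have s1: "norm a + norm b = 1" using LIMSEQ_unique tendsto_const by metis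
  have "(\<lambda>n. phi ((f \<circ> r) n) ((g \<circ> r) n)) \<longlonglongrightarrow> phi a b"
    by (intro phi_tendsto r)
  moreover have "\<forall>n\<ge>0. phi ((f \<circ> r) n) ((g \<circ> r) n) \<le> inverse (real (Suc n))"
    using P inv_Suc_mono[OF r(1)] unfolding f_def g_def by (smt (verit) comp_apply)
  ultimately have "phi a b \<le> 0"
    using LIMSEQ_le[OF _ inv_Suc_tendsto] by blast
  then have "phi a b = 0" using phi_nonneg[of a b] by simp
  then have "a = 0" "b = 0" using phi_zero_iff by auto
  then show False using s1 by simp
qed

lemma sc_comb:
  assumes p: "p \<in> K_span2 scY u v" and q: "q \<in> K_span2 scY u v"
    and np: "norm p = 1" and nq: "norm q \<le> 1" and t: "0 < t" "t \<le> 1/2"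
    and e: "norm ((1 - t) *\<^sub>R p + t *\<^sub>R q) = 1"
  shows "p = q"
proof (rule ccontr)
  assume pq: "p \<noteq> q"
  have "norm ((1 - t) *\<^sub>R p + t *\<^sub>R q) \<le> norm ((1 - t) *\<^sub>R p) + norm (t *\<^sub>R q)"
    by (rule norm_triangle_ineq)
  also have "\<dots> = (1 - t) * norm p + t * norm q" using t by simp
  finally have "1 \<le> (1 - t) + t * norm q" using e np by simp
  then have "t * 1 \<le> t * norm q" by linarith
  then have "1 \<le> norm q" using t by simp
  then have nq1: "norm q = 1" using nq by simp
  have mid: "norm (p + q) / 2 < 1"
    using sconv p q np nq1 pq unfolding strictly_convex_set_def by blast
  have id1: "(2*t) *\<^sub>R ((1/2) *\<^sub>R (p + q)) = t *\<^sub>R p + t *\<^sub>R q"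
    by (simp add: scaleR_add_right)
  have id2: "(1 - 2*t) *\<^sub>R p + t *\<^sub>R p = (1 - t) *\<^sub>R p"
  proof -
    have "(1 - 2*t) *\<^sub>R p + t *\<^sub>R p = ((1 - 2*t) + t) *\<^sub>R p"
      by (rule scaleR_left_distrib[symmetric])
    also have "(1 - 2*t) + t = 1 - t" by simp
    finally show ?thesis .
  qed
  have eq: "(1 - t) *\<^sub>R p + t *\<^sub>R q = (1 - 2*t) *\<^sub>R p + (2*t) *\<^sub>R ((1/2) *\<^sub>R (p + q))"
    unfolding id1 id2[symmetric] by (simp only: add.assoc)
  have "norm ((1 - 2*t) *\<^sub>R p + (2*t) *\<^sub>R ((1/2) *\<^sub>R (p + q))) \<le> norm ((1 - 2*t) *\<^sub>R p) + norm ((2*t) *\<^sub>R ((1/2) *\<^sub>R (p + q)))"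
    by (rule norm_triangle_ineq)
  also have "\<dots> = (1 - 2*t) * norm p + (2*t) * (norm (p + q) / 2)" using t by simp
  finally have le: "1 \<le> (1 - 2*t) + (2*t) * (norm (p + q) / 2)" using e eq np by simp
  have "(2*t) * (norm (p + q) / 2) < (2*t) * 1" using mid t by (intro mult_strict_left_mono) auto
  with le show False by linarith
qed

end



context msetup
begin

lemma minimizer: "\<exists>c0. \<forall>c. phi c0 1 \<le> phi c 1"
proof -
  obtain \<kappa> where k: "\<kappa> > 0" "\<And>a b. \<kappa> * (norm a + norm b) \<le> phi a b" using phi_lower by blast
  define m where "m = Inf (range (\<lambda>c. phi c 1))"
  have bdd: "bdd_below (range (\<lambda>c. phi c 1))" by (rule bdd_belowI[of _ 0]) (auto simp: phi_nonneg)
  have mle: "m \<le> phi c 1" for c unfolding m_def by (rule cInf_lower) (use bdd in auto)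
  have "\<forall>n. \<exists>c. phi c 1 < m + inverse (real (Suc n))"
  proof
    fix n
    have "Inf (range (\<lambda>c. phi c 1)) < m + inverse (real (Suc n))" unfolding m_def by simp
    then show "\<exists>c. phi c 1 < m + inverse (real (Suc n))"
      using cInf_less_iff[of "range (\<lambda>c. phi c 1)"] bdd by auto
  qed
  then obtain cs where cs: "\<And>n. phi (cs n) 1 < m + inverse (real (Suc n))" by metis
  have bnd: "norm (cs n) \<le> (m + 1) / \<kappa>" for n
  proof -
    have "\<kappa> * (norm (cs n) + norm (1::'k)) \<le> phi (cs n) 1" by (rule k(2))
    moreover have "inverse (real (Suc n)) \<le> 1" by (simp add: inverse_le_1_iff)
    ultimately have "\<kappa> * norm (cs n) \<le> m + 1" using cs[of n] k(1) by (simp add: algebra_simps)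
    then show ?thesis using k(1) by (simp add: field_simps)
  qed
  obtain c0 r where r: "strict_mono r" "(cs \<circ> r) \<longlonglongrightarrow> c0" using BW_k[of cs] bnd by blast
  have "(\<lambda>n. phi ((cs \<circ> r) n) ((\<lambda>n. 1) n)) \<longlonglongrightarrow> phi c0 1"
    by (intro phi_tendsto r tendsto_const)
  moreover have "(\<lambda>n. m + inverse (real (Suc n))) \<longlonglongrightarrow> m + 0"
    by (intro tendsto_intros inv_Suc_tendsto)
  moreover have "\<forall>n\<ge>0. phi ((cs \<circ> r) n) ((\<lambda>n. 1) n) \<le> m + inverse (real (Suc n))"
  proof (intro allI impI)
    fix n :: nat
    have "phi (cs (r n)) 1 < m + inverse (real (Suc (r n)))" by (rule cs)
    also have "\<dots> \<le> m + inverse (real (Suc n))" using inv_Suc_mono[OF r(1)] by simp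
    finally show "phi ((cs \<circ> r) n) ((\<lambda>n. 1) n) \<le> m + inverse (real (Suc n))" by simp
  qed
  ultimately have "phi c0 1 \<le> m + 0" by (intro LIMSEQ_le) blast+
  then show ?thesis using mle by (metis add_0_right order_trans)
qed

lemma uc_pairs:
  assumes e: "\<epsilon> > 0"
  shows "\<exists>\<delta>>0. \<forall>a b a' b'. phi a b = 1 \<and> phi a' b' = 1 \<and> phi (a - a') (b - b') \<ge> \<epsilon>
           \<longrightarrow> phi (a + a') (b + b') / 2 \<le> 1 - \<delta>"
proof (rule ccontr)
  assume H: "\<not> ?thesis"
  have "\<forall>n. \<exists>p::('k\<times>'k)\<times>('k\<times>'k). phi (fst (fst p)) (snd (fst p)) = 1 \<and> phi (fst (snd p)) (snd (snd p)) = 1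
      \<and> phi (fst (fst p) - fst (snd p)) (snd (fst p) - snd (snd p)) \<ge> \<epsilon>
      \<and> phi (fst (fst p) + fst (snd p)) (snd (fst p) + snd (snd p)) / 2 > 1 - inverse (real (Suc n))"
  proof
    fix n
    have "inverse (real (Suc n)) > 0" by simp
    then obtain a b a' b' where "phi a b = 1" "phi a' b' = 1" "phi (a - a') (b - b') \<ge> \<epsilon>"
       "\<not> phi (a + a') (b + b') / 2 \<le> 1 - inverse (real (Suc n))"
      using H by blast
    then show "\<exists>p::('k\<times>'k)\<times>('k\<times>'k). phi (fst (fst p)) (snd (fst p)) = 1 \<and> phi (fst (snd p)) (snd (snd p)) = 1
      \<and> phi (fst (fst p) - fst (snd p)) (snd (fst p) - snd (snd p)) \<ge> \<epsilon>
      \<and> phi (fst (fst p) + fst (snd p)) (snd (fst p) + snd (snd p)) / 2 > 1 - inverse (real (Suc n))"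
      by (intro exI[of _ "((a,b),(a',b'))"]) simp
  qed
  then obtain P where P: "\<And>n. phi (fst (fst (P n))) (snd (fst (P n))) = 1 \<and> phi (fst (snd (P n))) (snd (snd (P n))) = 1
      \<and> phi (fst (fst (P n)) - fst (snd (P n))) (snd (fst (P n)) - snd (snd (P n))) \<ge> \<epsilon>
      \<and> phi (fst (fst (P n)) + fst (snd (P n))) (snd (fst (P n)) + snd (snd (P n))) / 2 > 1 - inverse (real (Suc n))"
    by metis
  define f1 where "f1 = (\<lambda>n. fst (fst (P n)))"
  define f2 where "f2 = (\<lambda>n. snd (fst (P n)))"
  define f3 where "f3 = (\<lambda>n. fst (snd (P n)))"
  define f4 where "f4 = (\<lambda>n. snd (snd (P n)))"
  have P1: "phi (f1 n) (f2 n) = 1" and P2: "phi (f3 n) (f4 n) = 1"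
    and P3: "phi (f1 n - f3 n) (f2 n - f4 n) \<ge> \<epsilon>"
    and P4: "phi (f1 n + f3 n) (f2 n + f4 n) / 2 > 1 - inverse (real (Suc n))" for n
    using P[of n] unfolding f1_def f2_def f3_def f4_def by blast+
  obtain \<kappa> where k: "\<kappa> > 0" "\<And>a b. \<kappa> * (norm a + norm b) \<le> phi a b" using phi_lower by blast
  have bd: "norm a \<le> 1/\<kappa>" "norm b \<le> 1/\<kappa>" if "phi a b = 1" for a b
  proof -
    have "\<kappa> * (norm a + norm b) \<le> 1" using k(2)[of a b] that by simp
    then have "\<kappa> * norm a \<le> 1" "\<kappa> * norm b \<le> 1" using k(1) norm_ge_zero[of a] norm_ge_zero[of b]
      by (smt (verit) mult_left_mono)+
    then show "norm a \<le> 1/\<kappa>" "norm b \<le> 1/\<kappa>" using k(1) by (simp_all add: field_simps)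
  qed
  obtain r l1 l2 l3 l4 where r: "strict_mono r" "(f1 \<circ> r) \<longlonglongrightarrow> l1" "(f2 \<circ> r) \<longlonglongrightarrow> l2"
     "(f3 \<circ> r) \<longlonglongrightarrow> l3" "(f4 \<circ> r) \<longlonglongrightarrow> l4"
    using BW_k4[of f1 "1/\<kappa>" f2 f3 f4] bd P1 P2 by blast
  have t1: "(\<lambda>n. phi ((f1 \<circ> r) n) ((f2 \<circ> r) n)) \<longlonglongrightarrow> phi l1 l2" by (intro phi_tendsto r)
  have t2: "(\<lambda>n. phi ((f3 \<circ> r) n) ((f4 \<circ> r) n)) \<longlonglongrightarrow> phi l3 l4" by (intro phi_tendsto r)
  have t3: "(\<lambda>n. phi ((f1 \<circ> r) n - (f3 \<circ> r) n) ((f2 \<circ> r) n - (f4 \<circ> r) n)) \<longlonglongrightarrow> phi (l1 - l3) (l2 - l4)"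
    by (intro phi_tendsto tendsto_diff r)
  have t4: "(\<lambda>n. phi ((f1 \<circ> r) n + (f3 \<circ> r) n) ((f2 \<circ> r) n + (f4 \<circ> r) n) / 2) \<longlonglongrightarrow> phi (l1 + l3) (l2 + l4) / 2"
    by (intro tendsto_divide phi_tendsto tendsto_add r tendsto_const) simp
  have q1: "phi l1 l2 = 1"
    using t1 P1 by (metis (no_types, lifting) LIMSEQ_unique comp_apply tendsto_const ext)
  have q2: "phi l3 l4 = 1"
    using t2 P2 by (metis (no_types, lifting) LIMSEQ_unique comp_apply tendsto_const ext)
  have q3: "phi (l1 - l3) (l2 - l4) \<ge> \<epsilon>"
    by (rule LIMSEQ_le_const[OF t3]) (use P3 in simp)
  have "(\<lambda>n. 1 - inverse (real (Suc n))) \<longlonglongrightarrow> 1 - 0" by (intro tendsto_intros inv_Suc_tendsto)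
  moreover have "\<forall>n\<ge>0. 1 - inverse (real (Suc n)) \<le> phi ((f1 \<circ> r) n + (f3 \<circ> r) n) ((f2 \<circ> r) n + (f4 \<circ> r) n) / 2"
  proof (intro allI impI)
    fix n :: nat
    have "1 - inverse (real (Suc n)) \<le> 1 - inverse (real (Suc (r n)))" using inv_Suc_mono[OF r(1)] by simp
    also have "\<dots> < phi (f1 (r n) + f3 (r n)) (f2 (r n) + f4 (r n)) / 2" by (rule P4)
    finally show "1 - inverse (real (Suc n)) \<le> phi ((f1 \<circ> r) n + (f3 \<circ> r) n) ((f2 \<circ> r) n + (f4 \<circ> r) n) / 2" by simp
  qed
  ultimately have q4: "1 - 0 \<le> phi (l1 + l3) (l2 + l4) / 2" by (intro LIMSEQ_le[OF _ t4]) blast+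
  define p where "p = A l1 l2"
  define q where "q = A l3 l4"
  have "p \<noteq> q"
  proof
    assume "p = q"
    then have "phi (l1 - l3) (l2 - l4) = 0" unfolding phi_def A_diff p_def q_def by simp
    then show False using q3 e by simp
  qed
  then have "norm (p + q) / 2 < 1"
    using sconv q1 q2 A_span unfolding strictly_convex_set_def p_def q_def phi_def by blast
  moreover have "norm (p + q) = phi (l1 + l3) (l2 + l4)" unfolding p_def q_def phi_def A_add ..
  ultimately show False using q4 by simp
qed

end



definition Vs :: "(nat \<Rightarrow> 'k::real_normed_field) set" where "Vs = {x. \<forall>i\<ge>2. x i = 0}"

lemma Vs_eq:
  assumes "x \<in> Vs" "y \<in> Vs" "x 0 = y 0" "x 1 = y 1"
  shows "x = y"
proof
  fix i show "x i = y i"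
  proof (cases "i = 0 \<or> i = 1")
    case True then show ?thesis using assms by auto
  next
    case False then have "i \<ge> 2" by simp
    then show ?thesis using assms unfolding Vs_def by simp
  qed
qed

context msetup
begin

definition Nx :: "(nat \<Rightarrow> 'k) \<Rightarrow> real" where "Nx x = phi (x 0) (x 1)"

lemma banach: "K_banach_space Vs (\<lambda>c x i. c * x i) Nx"
proof -
  have ns: "K_normed_space Vs (\<lambda>c x i. c * x i) Nx"
    unfolding K_normed_space_def
  proof (intro conjI ballI allI)
    show "0 \<in> Vs" unfolding Vs_def by simp
    show "x + y \<in> Vs" if "x \<in> Vs" "y \<in> Vs" for x y using that unfolding Vs_def by simp
    show "(\<lambda>i. c * x i) \<in> Vs" if "x \<in> Vs" for c x using that unfolding Vs_def by simp
    show "(\<lambda>i. (a + b) * x i) = (\<lambda>i. a * x i) + (\<lambda>i. b * x i)" for a b :: 'k and x :: "nat \<Rightarrow> 'k"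
      by (simp add: fun_eq_iff ring_distribs)
    show "(\<lambda>i. a * (x + y) i) = (\<lambda>i. a * x i) + (\<lambda>i. a * y i)" for a :: 'k and x y :: "nat \<Rightarrow> 'k"
      by (simp add: fun_eq_iff ring_distribs)
    show "(\<lambda>i. a * b * x i) = (\<lambda>i. a * (b * x i))" for a b :: 'k and x :: "nat \<Rightarrow> 'k"
      by (simp add: fun_eq_iff mult.assoc)
    show "(\<lambda>i. 1 * x i) = x" for x :: "nat \<Rightarrow> 'k" by simp
    show "(Nx x = 0) = (x = 0)" if "x \<in> Vs" for x
    proof
      assume "Nx x = 0"
      then have "x 0 = 0" "x 1 = 0" unfolding Nx_def using phi_zero_iff by auto
      then show "x = 0" using Vs_eq[OF that, of 0] unfolding Vs_def by simp
    next
      assume "x = 0" then show "Nx x = 0" unfolding Nx_def using phi_zero_iff by simp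
    qed
    show "Nx (\<lambda>i. c * x i) = norm c * Nx x" for c x unfolding Nx_def by (rule phi_scale)
    show "Nx (x + y) \<le> Nx x + Nx y" for x y unfolding Nx_def by (simp add: phi_add)
  qed
  obtain \<kappa> where k: "\<kappa> > 0" "\<And>a b. \<kappa> * (norm a + norm b) \<le> phi a b" using phi_lower by blast
  have complete: "\<exists>x\<in>Vs. \<forall>e>0. \<exists>M. \<forall>n\<ge>M. Nx (f n - x) < e"
    if fV: "\<forall>n. f n \<in> Vs" and C: "\<forall>e>0. \<exists>M. \<forall>m\<ge>M. \<forall>n\<ge>M. Nx (f m - f n) < e" for f :: "nat \<Rightarrow> nat \<Rightarrow> 'k"
  proof -
    have coordC: "Cauchy (\<lambda>n. f n j)" if j: "j = 0 \<or> j = 1" for j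
      unfolding Cauchy_iff
    proof (intro allI impI)
      fix e :: real assume e: "e > 0"
      obtain M where M: "\<forall>m\<ge>M. \<forall>n\<ge>M. Nx (f m - f n) < \<kappa> * e" using C k(1) e by (meson mult_pos_pos)
      have "norm (f m j - f n j) < e" if "m \<ge> M" "n \<ge> M" for m n
      proof -
        have "\<kappa> * (norm (f m 0 - f n 0) + norm (f m 1 - f n 1)) \<le> Nx (f m - f n)"
          unfolding Nx_def using k(2) by simp
        also have "\<dots> < \<kappa> * e" using M that by blast
        finally have "norm (f m 0 - f n 0) + norm (f m 1 - f n 1) < e" using k(1) by simp
        moreover have "norm (f m 0 - f n 0) \<ge> 0" "norm (f m 1 - f n 1) \<ge> 0" by simp_all
        ultimately have "norm (f m 0 - f n 0) < e" "norm (f m 1 - f n 1) < e" by linarith+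
        then show ?thesis using j by blast
      qed
      then show "\<exists>M. \<forall>m\<ge>M. \<forall>n\<ge>M. norm (f m j - f n j) < e" by blast
    qed
    obtain l0 where l0: "(\<lambda>n. f n 0) \<longlonglongrightarrow> l0" using coordC[of 0] Cauchy_convergent_iff convergent_def by blast
    obtain l1 where l1: "(\<lambda>n. f n 1) \<longlonglongrightarrow> l1" using coordC[of 1] Cauchy_convergent_iff convergent_def by blast
    define x where "x = (\<lambda>i::nat. if i = 0 then l0 else if i = 1 then l1 else 0)"
    have xV: "x \<in> Vs" unfolding Vs_def x_def by simp
    have "(\<lambda>n. Nx (f n - x)) \<longlonglongrightarrow> phi 0 0"
      unfolding Nx_def x_def using l0 l1 by (auto intro!: phi_tendsto simp: LIM_zero)
    moreover have "phi 0 0 = 0" using phi_zero_iff[of 0 0] by simp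
    ultimately have t: "(\<lambda>n. Nx (f n - x)) \<longlonglongrightarrow> 0" by simp
    have "\<forall>e>0. \<exists>M. \<forall>n\<ge>M. Nx (f n - x) < e"
    proof (intro allI impI)
      fix e :: real assume "e > 0"
      then obtain M where "\<forall>n\<ge>M. norm (Nx (f n - x) - 0) < e" using t unfolding LIMSEQ_iff by blast
      then show "\<exists>M. \<forall>n\<ge>M. Nx (f n - x) < e" by (auto simp: phi_nonneg Nx_def)
    qed
    then show ?thesis using xV by blast
  qed
  show ?thesis unfolding K_banach_space_def using ns complete by blast
qed

lemma uconv: "uniformly_convex Vs Nx"
  unfolding uniformly_convex_def
proof (intro allI impI)
  fix e :: real assume "e > 0"
  then obtain d where d: "d > 0" "\<forall>a b a' b'. phi a b = 1 \<and> phi a' b' = 1 \<and> phi (a - a') (b - b') \<ge> e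
           \<longrightarrow> phi (a + a') (b + b') / 2 \<le> 1 - d" using uc_pairs by blast
  show "\<exists>\<delta>>0. \<forall>x\<in>Vs. \<forall>y\<in>Vs. Nx x = 1 \<and> Nx y = 1 \<and> e \<le> Nx (x - y) \<longrightarrow> Nx (x + y) / 2 \<le> 1 - \<delta>"
    using d unfolding Nx_def by auto
qed

end



context msetup
begin

lemma u_nz: "u \<noteq> 0"
proof
  assume "u = 0"
  then have "scY 1 u + scY 0 v = 0" by simp
  then show False using ind unfolding K_indep2_def by (metis one_neq_zero)
qed

lemma proj_le:
  assumes c0: "\<forall>c. phi c0 1 \<le> phi c 1"
  shows "phi (b * c0) b \<le> phi a b"
proof (cases "b = 0")
  case True
  then show ?thesis using phi_zero_iff[of 0 0] phi_nonneg[of a b] by simp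
next
  case False
  have "phi a b = phi (b * (a / b)) (b * 1)" using False by simp
  also have "\<dots> = norm b * phi (a / b) 1" by (rule phi_scale)
  finally have e1: "phi a b = norm b * phi (a / b) 1" .
  have e2: "phi (b * c0) b = norm b * phi c0 1" using phi_scale[of b c0 1] by simp
  show ?thesis unfolding e1 e2 using c0 by (intro mult_left_mono) auto
qed

lemma not_sbpbp: "\<not> uniform_sBPBp Vs (\<lambda>c x i. c * x i) Nx scY"
proof
  assume H: "uniform_sBPBp Vs (\<lambda>c x i. c * x i) Nx scY"
  obtain c0 where c0: "\<forall>c. phi c0 1 \<le> phi c 1" using minimizer by blast
  obtain \<eta> where eta: "\<eta> > 0" and Heta: "\<And>T :: (nat \<Rightarrow> 'k) \<Rightarrow> 'b.
        K_linear_on Vs (\<lambda>c x i. c * x i) scY T \<and> bounded_on Vs Nx T \<and> op_norm_on Vs Nx T = 1 \<Longrightarrow>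
        (\<forall>x0\<in>Vs. Nx x0 = 1 \<and> norm (T x0) > 1 - \<eta> \<longrightarrow>
           (\<exists>x1\<in>Vs. Nx x1 = 1 \<and> norm (T x1) = 1 \<and> Nx (x1 - x0) < 1))"
    using H[unfolded uniform_sBPBp_def, rule_format, OF zero_less_one] by blast
  define t where "t = min (\<eta>/2) (1/2)"
  have t: "0 < t" "t \<le> 1/2" "t < \<eta>" using eta unfolding t_def by auto
  define T where "T = (\<lambda>x::nat \<Rightarrow> 'k. (1 - t) *\<^sub>R A (x 0) (x 1) + t *\<^sub>R A (x 1 * c0) (x 1))"
  have Tle: "norm (T x) \<le> Nx x" for x
  proof -
    have "norm (T x) \<le> norm ((1 - t) *\<^sub>R A (x 0) (x 1)) + norm (t *\<^sub>R A (x 1 * c0) (x 1))"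
      unfolding T_def by (rule norm_triangle_ineq)
    also have "\<dots> = (1 - t) * phi (x 0) (x 1) + t * phi (x 1 * c0) (x 1)"
      using t unfolding phi_def by simp
    also have "\<dots> \<le> (1 - t) * phi (x 0) (x 1) + t * phi (x 0) (x 1)"
      using proj_le[OF c0, of "x 1" "x 0"] t by (intro add_left_mono mult_left_mono) auto
    also have "\<dots> = Nx x" unfolding Nx_def by (simp add: algebra_simps)
    finally show ?thesis .
  qed
  have lin: "K_linear_on Vs (\<lambda>c x i. c * x i) scY T"
    unfolding K_linear_on_def
  proof (intro conjI ballI allI)
    fix x y :: "nat \<Rightarrow> 'k"
    have "A ((x + y) 0) ((x + y) 1) = A (x 0) (x 1) + A (y 0) (y 1)" by (simp add: A_add)
    moreover have "A ((x + y) 1 * c0) ((x + y) 1) = A (x 1 * c0) (x 1) + A (y 1 * c0) (y 1)"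
      by (simp add: A_add[symmetric] ring_distribs)
    ultimately show "T (x + y) = T x + T y" unfolding T_def by (simp add: scaleR_add_right)
  next
    fix c :: 'k and x :: "nat \<Rightarrow> 'k"
    have "A (c * x 0) (c * x 1) = scY c (A (x 0) (x 1))" by (rule A_scale)
    moreover have "A (c * x 1 * c0) (c * x 1) = scY c (A (x 1 * c0) (x 1))"
      using A_scale[of c "x 1 * c0" "x 1"] by (simp add: mult.assoc)
    ultimately show "T (\<lambda>i. c * x i) = scY c (T x)" unfolding T_def by (simp add: sc_add2 sc_scaleR)
  qed
  have bnd: "bounded_on Vs Nx T" unfolding bounded_on_def using Tle by (intro exI[of _ 1]) simp
  have pc0: "phi c0 1 > 0" using phi_nonneg[of c0 1] phi_zero_iff[of c0 1] by simp
  define s where "s = (of_real (inverse (phi c0 1)) :: 'k)"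
  define wn where "wn = (\<lambda>i::nat. if i = 0 then s * c0 else if i = 1 then s * 1 else 0)"
  have wnV: "wn \<in> Vs" unfolding Vs_def wn_def by simp
  have w01: "wn 0 = s * c0" "wn 1 = s * 1" unfolding wn_def by simp_all
  have "Nx wn = phi (s * c0) (s * 1)" by (simp only: Nx_def w01)
  also have "\<dots> = norm s * phi c0 1" by (rule phi_scale)
  also have "norm s = inverse (phi c0 1)" unfolding s_def norm_of_real using pc0 by simp
  finally have Nwn: "Nx wn = 1" using pc0 by simp
  have Twn: "T wn = A (wn 0) (wn 1)"
  proof -
    have "wn 1 * c0 = wn 0" unfolding wn_def by simp
    then show ?thesis unfolding T_def by (simp only: scaleR_collapse)
  qed
  have opn: "op_norm_on Vs Nx T = 1"
    unfolding op_norm_on_def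
  proof (rule cSup_eq_maximum)
    show "1 \<in> (\<lambda>x. norm (T x)) ` {x \<in> Vs. Nx x \<le> 1}"
    proof
      show "1 = norm (T wn)" using Nwn unfolding Twn Nx_def phi_def by simp
      show "wn \<in> {x \<in> Vs. Nx x \<le> 1}" using wnV Nwn by simp
    qed
    show "z \<le> 1" if zin: "z \<in> (\<lambda>x. norm (T x)) ` {x \<in> Vs. Nx x \<le> 1}" for z
    proof -
      obtain x where "x \<in> {x \<in> Vs. Nx x \<le> 1}" "z = norm (T x)" using zin by blast
      then show ?thesis using Tle[of x] by simp
    qed
  qed
  define x0 where "x0 = (\<lambda>i::nat. if i = 0 then (of_real (inverse (norm u)) :: 'k) else 0)"
  have x0V: "x0 \<in> Vs" unfolding Vs_def x0_def by simp
  have Ax0: "norm (A (x0 0) (x0 1)) = 1"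
    unfolding x0_def A_def using u_nz by (simp add: sc_norm norm_of_real del: of_real_inverse)
  have Nx0: "Nx x0 = 1" unfolding Nx_def phi_def using Ax0 .
  have Tx0: "T x0 = (1 - t) *\<^sub>R A (x0 0) (x0 1)" unfolding T_def x0_def by simp
  have "norm (T x0) = 1 - t" unfolding Tx0 using Ax0 t by simp
  then have "norm (T x0) > 1 - \<eta>" using t by simp
  then obtain x1 where x1: "x1 \<in> Vs" "Nx x1 = 1" "norm (T x1) = 1" "Nx (x1 - x0) < 1"
    using Heta[of T] lin bnd opn x0V Nx0 by blast
  have "A (x1 0) (x1 1) = A (x1 1 * c0) (x1 1)"
  proof (rule sc_comb[OF A_span A_span _ _ t(1,2)])
    show "norm (A (x1 0) (x1 1)) = 1" using x1(2) unfolding Nx_def phi_def .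
    show "norm (A (x1 1 * c0) (x1 1)) \<le> 1" using proj_le[OF c0, of "x1 1" "x1 0"] x1(2)
      unfolding Nx_def phi_def by simp
    show "norm ((1 - t) *\<^sub>R A (x1 0) (x1 1) + t *\<^sub>R A (x1 1 * c0) (x1 1)) = 1"
      using x1(3) unfolding T_def .
  qed
  then have "A (x1 0 - x1 1 * c0) (x1 1 - x1 1) = 0" unfolding A_diff by simp
  then have "x1 0 - x1 1 * c0 = 0" using A_inj by blast
  then have eq0: "x1 0 = x1 1 * c0" by simp
  have "Nx (x1 - x0) = phi (x1 0 - x0 0) (x1 1)" unfolding Nx_def x0_def by simp
  also have "\<dots> \<ge> phi (x1 1 * c0) (x1 1)" by (rule proj_le[OF c0])
  finally have "Nx (x1 - x0) \<ge> 1" using x1(2) eq0 unfolding Nx_def by simp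
  then show False using x1(4) by simp
qed

end

theorem mainTheorem15:
  fixes scY :: "'k::{real_normed_field,banach} \<Rightarrow> 'b::banach \<Rightarrow> 'b"
  assumes "K_scalar_action scY"
    and "\<exists>u v. K_indep2 scY u v \<and> strictly_convex_set (K_span2 scY u v)"
  shows "\<exists>(V :: (nat \<Rightarrow> 'k) set) (N :: (nat \<Rightarrow> 'k) \<Rightarrow> real).
           K_banach_space V (\<lambda>c x i. c * x i) N \<and> uniformly_convex V N \<and>
           \<not> uniform_sBPBp V (\<lambda>c x i. c * x i) N scY"
proof -
  obtain u v where uv: "K_indep2 scY u v" "strictly_convex_set (K_span2 scY u v)" using assms(2) by blast
  interpret msetup scY u v using assms(1) uv by unfold_locales
  show ?thesis using banach uconv not_sbpbp by blast
qed



end
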